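(* Let $t_1,c_1>0$ and let $f:[0,t_1]\to\mathbb R^2$ be continuous with $f(0)=0$. Suppose $(g_1,M_1)$ and $(g_2,M_2)$ are two solutions of the deterministic Skorokhod problem $g_i(t)=g_i(0)+f(t)+RM_i(t)$, $t\in[0,t_1]$, with $g_1(0),g_2(0)\ne0$, $|g_1(0)-g_2(0)|\le c_1/4$, and $\sup_{s\le t_*\wedge t_1}|g_1(s)-g_2(s)|\ge c_1$, where $t_*=\inf\{t>0:g_2(t)=0\}$. Then $$t_*\ge\inf\{y:\operatorname{Osc}(f,t_1,y)\ge c_1/(4\chi_1)\}.$$
   Context: $a_1>0>a_2$ with $|a_1a_2|>1$ (standing assumptions), $R=\begin{pmatrix}1&-a_1\\-a_2&1\end{pmatrix}$, $D$ the closed first quadrant, $\Gamma_d$ the nonnegative $x$-axis, $\Gamma_u$ the nonnegative $y$-axis. A solution $(g,M)$ of the deterministic Skorokhod problem with initial point $x_0\in D$ and driving function $f$ consists of continuous $g:[0,t_1]\to D$ and $M=(M^1,M^2)$ with continuous non-decreasing components, $M(0)=0$, $M^1$ increasing only when $g\in\Gamma_d$, $M^2$ increasing only when $g\in\Gamma_u$, with $g(t)=x_0+f(t)+RM(t)$. $\operatorname{Osc}(f,t_1,y)=\sup_{0\le s_1\le s_2\le s_1+y\le t_1}|f(s_2)-f(s_1)|$. $\chi_1$ is a constant depending only on $a_1,a_2$ such that for all such $t_0$, $f$ (with $f(0)=0$), $x_0$ and every solution $(g,M)$ on $[0,t_0]$, $\sup_{u_1,u_2\in[s,t]}(|g(u_2)-g(u_1)|+|M(u_2)-M(u_1)|)\le\chi_1\sup_{u_1,u_2\in[s,t]}|f(u_2)-f(u_1)|$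 for all $0\le s\le t\le t_0$ (such a constant exists since $R$ is completely-$S$). *)

theory Defs
  imports "HOL-Analysis.Analysis"
begin

text \<open>Points of the plane are pairs of reals; the norm on real \<times> real is Euclidean.\<close>

definition Rmat :: "real \<Rightarrow> real \<Rightarrow> real \<times> real \<Rightarrow> real \<times> real" where
  "Rmat a1 a2 m = (fst m - a1 * snd m, - a2 * fst m + snd m)"

definition quadD :: "(real \<times> real) set" where
  "quadD = {p. fst p \<ge> 0 \<and> snd p \<ge> 0}"

definition Gamma_d :: "(real \<times> real) set" where
  "Gamma_d = {p. fst p \<ge> 0 \<and> snd p = 0}"

definition Gamma_u :: "(real \<times> real) set" where
  "Gamma_u = {p. fst p = 0 \<and> snd p \<ge> 0}"

text \<open>(g, M) solves the deterministic Skorokhod problem on [0,t1] with initial point x0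
  and driving function f. "M^i increases only when g is on the face" is expressed as:
  on any subinterval where g avoids the face, M^i is constant.\<close>
definition skorokhod_sol ::
  "real \<Rightarrow> real \<Rightarrow> real \<Rightarrow> real \<times> real \<Rightarrow> (real \<Rightarrow> real \<times> real)
     \<Rightarrow> (real \<Rightarrow> real \<times> real) \<Rightarrow> (real \<Rightarrow> real \<times> real) \<Rightarrow> bool" where
  "skorokhod_sol a1 a2 t1 x0 f g M \<longleftrightarrow>
     x0 \<in> quadD \<and>
     continuous_on {0..t1} g \<and> (\<forall>t\<in>{0..t1}. g t \<in> quadD) \<and>
     continuous_on {0..t1} M \<and>
     mono_on {0..t1} (\<lambda>t. fst (M t)) \<and> mono_on {0..t1} (\<lambda>t. snd (M t)) \<and>
     M 0 = (0, 0) \<and>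
     (\<forall>s t. 0 \<le> s \<and> s \<le> t \<and> t \<le> t1 \<and> (\<forall>u\<in>{s..t}. g u \<notin> Gamma_d)
        \<longrightarrow> fst (M s) = fst (M t)) \<and>
     (\<forall>s t. 0 \<le> s \<and> s \<le> t \<and> t \<le> t1 \<and> (\<forall>u\<in>{s..t}. g u \<notin> Gamma_u)
        \<longrightarrow> snd (M s) = snd (M t)) \<and>
     (\<forall>t\<in>{0..t1}. g t = x0 + f t + Rmat a1 a2 (M t))"

definition Osc :: "(real \<Rightarrow> real \<times> real) \<Rightarrow> real \<Rightarrow> real \<Rightarrow> real" where
  "Osc f t1 y = (SUP p \<in> {(s1, s2). 0 \<le> s1 \<and> s1 \<le> s2 \<and> s2 \<le> s1 + y \<and> s1 + y \<le> t1}.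
                    norm (f (snd p) - f (fst p)))"

definition chi_const :: "real \<Rightarrow> real \<Rightarrow> real \<Rightarrow> bool" where
  "chi_const a1 a2 chi \<longleftrightarrow>
     (\<forall>t0 f x0 g M. continuous_on {0..t0} f \<and> f 0 = 0 \<and> x0 \<in> quadD \<and>
        skorokhod_sol a1 a2 t0 x0 f g M \<longrightarrow>
        (\<forall>s t. 0 \<le> s \<and> s \<le> t \<and> t \<le> t0 \<longrightarrow>
           (SUP p \<in> {s..t} \<times> {s..t}. norm (g (snd p) - g (fst p)) + norm (M (snd p) - M (fst p)))
             \<le> chi * (SUP p \<in> {s..t} \<times> {s..t}. norm (f (snd p) - f (fst p)))))"

end

theory Submission
  imports Defs
begin

lemma bnd_fun:
  fixes h :: "real \<Rightarrow> real \<times> real"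
  assumes "continuous_on {a..b} h"
  obtains B where "\<And>x. x \<in> {a..b} \<Longrightarrow> norm (h x) \<le> B"
proof -
  have "bounded (h ` {a..b})"
    using compact_continuous_image[OF assms compact_Icc] compact_imp_bounded by blast
  then obtain B where "\<forall>y\<in>h ` {a..b}. norm y \<le> B" by (auto simp: bounded_iff)
  then show ?thesis using that by blast
qed

lemma bdd_diff:
  fixes h k :: "real \<Rightarrow> real \<times> real"
  assumes "continuous_on {a..b} h" "continuous_on {a..b} k" "S \<subseteq> {a..b} \<times> {a..b}"
  shows "bdd_above ((\<lambda>p. norm (h (snd p) - h (fst p)) + norm (k (snd p) - k (fst p))) ` S)"
proof -
  obtain B where B: "\<And>x. x \<in> {a..b} \<Longrightarrow> norm (h x) \<le> B" using bnd_fun[OF assms(1)] by blast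
  obtain C where C: "\<And>x. x \<in> {a..b} \<Longrightarrow> norm (k x) \<le> C" using bnd_fun[OF assms(2)] by blast
  show ?thesis
  proof (rule bdd_aboveI2)
    fix p assume p: "p \<in> S"
    define z where "z = norm (h (snd p) - h (fst p)) + norm (k (snd p) - k (fst p))"
    have in1: "fst p \<in> {a..b}" "snd p \<in> {a..b}" using p assms(3) by auto
    have "norm (h (snd p) - h (fst p)) \<le> norm (h (snd p)) + norm (h (fst p))" by (rule norm_triangle_ineq4)
    moreover have "norm (k (snd p) - k (fst p)) \<le> norm (k (snd p)) + norm (k (fst p))" by (rule norm_triangle_ineq4)
    ultimately show "norm (h (snd p) - h (fst p)) + norm (k (snd p) - k (fst p)) \<le> 2*B + 2*C" using z_def B[OF in1(1)] B[OF in1(2)] C[OF in1(1)] C[OF in1(2)] by linarith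
  qed
qed

lemma bdd_diff1:
  fixes h :: "real \<Rightarrow> real \<times> real"
  assumes "continuous_on {a..b} h" "S \<subseteq> {a..b} \<times> {a..b}"
  shows "bdd_above ((\<lambda>p. norm (h (snd p) - h (fst p))) ` S)"
proof -
  have "bdd_above ((\<lambda>p. norm (h (snd p) - h (fst p)) + norm ((\<lambda>_. 0::real\<times>real) (snd p) - (\<lambda>_. 0) (fst p))) ` S)"
    by (rule bdd_diff[OF assms(1) _ assms(2)]) simp
  then show ?thesis by simp
qed

lemma sol_restrict:
  assumes "skorokhod_sol a1 a2 t1 x f g M" "0 \<le> T" "T \<le> t1"
  shows "skorokhod_sol a1 a2 T x f g M"
proof -
  have sub: "{0..T} \<subseteq> {0..t1}" using assms by auto
  show ?thesis using assms(1) unfolding skorokhod_sol_def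
    using continuous_on_subset[OF _ sub] mono_on_subset[OF _ sub] sub assms(3)
    by (meson atLeastAtMost_iff order_trans)
qed

lemma osc_ge:
  assumes "continuous_on {0..t1} f" "0 \<le> u1" "u1 \<le> u2" "u2 \<le> t1"
  shows "norm (f u2 - f u1) \<le> Osc f t1 (u2 - u1)"
proof -
  let ?S = "{(s1, s2). 0 \<le> s1 \<and> s1 \<le> s2 \<and> s2 \<le> s1 + (u2 - u1) \<and> s1 + (u2 - u1) \<le> t1}"
  have sub: "?S \<subseteq> {0..t1} \<times> {0..t1}" by auto
  have "(u1, u2) \<in> ?S" using assms by auto
  then have "(\<lambda>p. norm (f (snd p) - f (fst p))) (u1,u2) \<le> (SUP p\<in>?S. norm (f (snd p) - f (fst p)))"
    by (rule cSUP_upper[OF _ bdd_diff1[OF assms(1) sub]])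
  then show ?thesis unfolding Osc_def by (simp only: fst_conv snd_conv)
qed

lemma chi_apply:
  assumes "chi_const a1 a2 chi" "continuous_on {0..t0} f" "f 0 = 0" "x0 \<in> quadD"
    "skorokhod_sol a1 a2 t0 x0 f g M" "0 \<le> t0"
  shows "(SUP p \<in> {0..t0} \<times> {0..t0}. norm (g (snd p) - g (fst p)) + norm (M (snd p) - M (fst p)))
             \<le> chi * (SUP p \<in> {0..t0} \<times> {0..t0}. norm (f (snd p) - f (fst p)))"
  apply (rule assms(1)[unfolded chi_const_def, rule_format, of t0 f x0 g M 0 t0])
  using assms(2-6) by auto

theorem lemma9p4:
  fixes a1 a2 chi1 t1 c1 :: real
    and f g1 g2 M1 M2 :: "real \<Rightarrow> real \<times> real"
    and x1 x2 :: "real \<times> real"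
  assumes "a1 > 0" and "a2 < 0" and "\<bar>a1 * a2\<bar> > 1"
    and "chi1 > 0" and "chi_const a1 a2 chi1"
    and "t1 > 0" and "c1 > 0"
    and "continuous_on {0..t1} f" and "f 0 = 0"
    and "skorokhod_sol a1 a2 t1 x1 f g1 M1"
    and "skorokhod_sol a1 a2 t1 x2 f g2 M2"
    and "g1 0 \<noteq> 0" and "g2 0 \<noteq> 0"
    and "norm (g1 0 - g2 0) \<le> c1 / 4"
    and "tstar = Inf (ereal ` {t. 0 < t \<and> t \<le> t1 \<and> g2 t = 0})"
    and "(SUP s \<in> {s. 0 \<le> s \<and> ereal s \<le> min tstar (ereal t1)}. norm (g1 s - g2 s)) \<ge> c1"
  shows "tstar \<ge> Inf (ereal ` {y. 0 \<le> y \<and> y \<le> t1 \<and> Osc f t1 y \<ge> c1 / (4 * chi1)})"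
proof (rule ccontr)
  let ?Z = "{t. 0 < t \<and> t \<le> t1 \<and> g2 t = 0}"
  let ?Y = "{y. 0 \<le> y \<and> y \<le> t1 \<and> Osc f t1 y \<ge> c1 / (4 * chi1)}"
  assume neg: "\<not> tstar \<ge> Inf (ereal ` ?Y)"
  have Zne: "?Z \<noteq> {}"
  proof
    assume e: "?Z = {}"
    have "tstar = \<infinity>" unfolding assms(15) e by (simp add: top_ereal_def)
    then show False using neg by simp
  qed
  then obtain z where z: "z \<in> ?Z" by blast
  have lo: "tstar \<ge> 0" unfolding assms(15) by (rule Inf_greatest) auto
  have "ereal z \<in> ereal ` ?Z" using z by (rule imageI)
  then have "Inf (ereal ` ?Z) \<le> ereal z" by (rule Inf_lower)
  moreover have "ereal z \<le> ereal t1" using z by simp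
  ultimately have hi: "tstar \<le> ereal t1" unfolding assms(15) by (rule order_trans)
  define T where "T = real_of_ereal tstar"
  have nz: "tstar \<noteq> \<infinity>" "tstar \<noteq> - \<infinity>" using lo hi by auto
  have T: "tstar = ereal T" unfolding T_def using nz by (cases tstar) simp_all
  have T0: "0 \<le> T" using lo T by simp
  have T1: "T \<le> t1" using hi T by simp
  have TI: "ereal T < Inf (ereal ` ?Y)" using neg T by simp
  have oscsmall: "Osc f t1 y < c1 / (4 * chi1)" if "0 \<le> y" "y \<le> T" for y
  proof (rule ccontr)
    assume "\<not> ?thesis"
    then have "y \<in> ?Y" using that T1 by auto
    then have "Inf (ereal ` ?Y) \<le> ereal y" by (simp add: Inf_lower)
    moreover have "ereal y \<le> ereal T" using that by simp
    ultimately have "Inf (ereal ` ?Y) \<le> ereal T" by (rule order_trans)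
    then show False using TI by simp
  qed
  have fT: "continuous_on {0..T} f" using continuous_on_subset[OF assms(8)] T0 T1 by auto
  have fsup: "(SUP p \<in> {0..T} \<times> {0..T}. norm (f (snd p) - f (fst p))) \<le> c1 / (4 * chi1)"
  proof (rule cSUP_least)
    show "{0..T} \<times> {0..T} \<noteq> {}" using T0 by auto
    fix p :: "real \<times> real" assume p: "p \<in> {0..T} \<times> {0..T}"
    show "norm (f (snd p) - f (fst p)) \<le> c1 / (4 * chi1)"
    proof (cases "fst p \<le> snd p")
      case True
      have "norm (f (snd p) - f (fst p)) \<le> Osc f t1 (snd p - fst p)"
        using osc_ge[OF assms(8)] p True T1 by auto
      also have "\<dots> < c1 / (4 * chi1)" using oscsmall p True by auto
      finally show ?thesis by simp
    next
      case False
      have "norm (f (snd p) - f (fst p)) = norm (f (fst p) - f (snd p))" by (rule norm_minus_commute)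
      also have "\<dots> \<le> Osc f t1 (fst p - snd p)"
        using osc_ge[OF assms(8)] p False T1 by auto
      also have "\<dots> < c1 / (4 * chi1)" using oscsmall p False by auto
      finally show ?thesis by simp
    qed
  qed
  have gbound: "norm (g s - g 0) \<le> c1 / 4"
    if sol: "skorokhod_sol a1 a2 t1 x f g M" and s: "s \<in> {0..T}" for x g M s
  proof -
    have solT: "skorokhod_sol a1 a2 T x f g M" using sol_restrict[OF sol T0 T1] .
    have xD: "x \<in> quadD" using sol unfolding skorokhod_sol_def by blast
    have gc: "continuous_on {0..T} g" and Mc: "continuous_on {0..T} M"
      using solT unfolding skorokhod_sol_def by blast+
    have ch: "(SUP p \<in> {0..T} \<times> {0..T}. norm (g (snd p) - g (fst p)) + norm (M (snd p) - M (fst p)))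
             \<le> chi1 * (SUP p \<in> {0..T} \<times> {0..T}. norm (f (snd p) - f (fst p)))"
      by (rule chi_apply[OF assms(5) fT assms(9) xD solT T0])
    have "(0, s) \<in> {0..T} \<times> {0..T}" using s T0 by auto
    then have "(\<lambda>p. norm (g (snd p) - g (fst p)) + norm (M (snd p) - M (fst p))) (0,s) \<le>
        (SUP p \<in> {0..T} \<times> {0..T}. norm (g (snd p) - g (fst p)) + norm (M (snd p) - M (fst p)))"
      by (rule cSUP_upper[OF _ bdd_diff[OF gc Mc subset_refl]])
    then have "norm (g s - g 0) + norm (M s - M 0) \<le>
        (SUP p \<in> {0..T} \<times> {0..T}. norm (g (snd p) - g (fst p)) + norm (M (snd p) - M (fst p)))"
      by (simp only: fst_conv snd_conv)
    also have "\<dots> \<le> chi1 * (c1 / (4 * chi1))"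
      using ch mult_left_mono[OF fsup] assms(4) by (meson less_eq_real_def order_trans)
    also have "\<dots> = c1 / 4" using assms(4) by simp
    finally have "norm (g s - g 0) + norm (M s - M 0) \<le> c1 / 4" .
    then show ?thesis using norm_ge_zero[of "M s - M 0"] by linarith
  qed
  have setEq: "{s. 0 \<le> s \<and> ereal s \<le> min tstar (ereal t1)} = {0..T}"
    using T T1 by (auto simp: min_def)
  have "(SUP s \<in> {0..T}. norm (g1 s - g2 s)) \<le> 3 * c1 / 4"
  proof (rule cSUP_least)
    show "{0..T} \<noteq> {}" using T0 by auto
    fix s assume s: "s \<in> {0..T}"
    have "g1 s - g2 s = (g1 s - g1 0) + (g1 0 - g2 0) - (g2 s - g2 0)" by simp
    then have "norm (g1 s - g2 s) \<le> norm ((g1 s - g1 0) + (g1 0 - g2 0)) + norm (g2 s - g2 0)"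
      using norm_triangle_ineq4[of "(g1 s - g1 0) + (g1 0 - g2 0)" "g2 s - g2 0"] by simp
    moreover have "norm ((g1 s - g1 0) + (g1 0 - g2 0)) \<le> norm (g1 s - g1 0) + norm (g1 0 - g2 0)"
      by (rule norm_triangle_ineq)
    ultimately have "norm (g1 s - g2 s) \<le> norm (g1 s - g1 0) + norm (g1 0 - g2 0) + norm (g2 s - g2 0)"
      by linarith
    then show "norm (g1 s - g2 s) \<le> 3 * c1 / 4"
      using gbound[OF assms(10) s] gbound[OF assms(11) s] assms(14) by linarith
  qed
  then show False using assms(16) setEq assms(7) by auto
qed

end
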